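(* Let $\lambda>0$ and $\mu_R,\mu_L,\mu_U>0$. The Markov jump process on $\mathbb{N}^3$, with coordinates $x=(x_R,x_L,x_U)$ and transitions $x\to x+e_R+e_U-e_L$ at rate $\mu_Lx_L$, $x\to x-e_R$ at rate $\mu_Rx_R$, $x\to x-e_U$ at rate $\mu_Ux_U$, and $x\to x+e_L$ at rate $\lambda$, has as invariant distribution the law of $(X+Y_1,Z,X+Y_2)$, where $X,Y_1,Y_2,Z$ are independent Poisson random variables with respective parameters $$\frac{\lambda}{\mu_R+\mu_U},\quad \frac{\lambda\mu_U}{\mu_R(\mu_R+\mu_U)},\quad\frac{\lambda\mu_R}{\mu_U(\mu_R+\mu_U)},\quad\frac{\lambda}{\mu_L}.$$
   Context: $e_R,e_L,e_U$ denote the unit vectors of $\mathbb{N}^3$ for the three coordinates. *)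

theory Defs
  imports "HOL-Probability.Probability"
begin

type_synonym state = "nat \<times> nat \<times> nat"  (* (x_R, x_L, x_U) *)

definition rate3 :: "real \<Rightarrow> real \<Rightarrow> real \<Rightarrow> real \<Rightarrow> state \<Rightarrow> state \<Rightarrow> real" where
  "rate3 lam muR muL muU x y =
     (case x of (xR, xL, xU) \<Rightarrow>
        (if xL \<ge> 1 \<and> y = (xR + 1, xL - 1, xU + 1) then muL * real xL else 0)
      + (if xR \<ge> 1 \<and> y = (xR - 1, xL, xU) then muR * real xR else 0)
      + (if xU \<ge> 1 \<and> y = (xR, xL, xU - 1) then muU * real xU else 0)
      + (if y = (xR, xL + 1, xU) then lam else 0))"

text \<open>A probability distribution p is invariant for the jump process with rates q
  if it satisfies the global balance equations p Q = 0.\<close>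
definition invariant_pmf :: "('s \<Rightarrow> 's \<Rightarrow> real) \<Rightarrow> 's pmf \<Rightarrow> bool" where
  "invariant_pmf q p \<longleftrightarrow>
     (\<forall>y. (\<Sum>\<^sub>\<infinity>x\<in>-{y}. pmf p x * q x y) = pmf p y * (\<Sum>\<^sub>\<infinity>z\<in>-{y}. q y z))"

end

theory Submission
  imports Defs
begin


definition pz :: "real \<Rightarrow> int \<Rightarrow> real" where
  "pz c i = (if i \<ge> 0 then c ^ nat i / fact (nat i) * exp (-c) else 0)"

lemma pz_shift: "of_int i * pz c i = c * pz c (i - 1)"
proof (cases "i \<ge> 1")
  case True
  then obtain n where n: "i = int (Suc n)" using True by (intro that[of "nat (i - 1)"]) simp
  have e1: "pz c (int (Suc n)) = c ^ Suc n / fact (Suc n) * exp (-c)"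
    unfolding pz_def nat_int by simp
  have e2: "pz c (int (Suc n) - 1) = c ^ n / fact n * exp (-c)"
    unfolding pz_def by simp
  have "real (Suc n) * (c ^ Suc n / fact (Suc n)) = c * (c ^ n / fact n)"
    by (simp add: fact_Suc del: of_nat_Suc)
  then show ?thesis unfolding n e1 e2 of_int_of_nat_eq by (metis mult.assoc)
next
  case False
  then show ?thesis by (cases "i = 0") (auto simp: pz_def)
qed

lemma pz_poisson: "c > 0 \<Longrightarrow> pmf (poisson_pmf c) n = pz c (int n)"
  by (simp add: pz_def)

definition T :: "real \<Rightarrow> real \<Rightarrow> real \<Rightarrow> int \<Rightarrow> int \<Rightarrow> int \<Rightarrow> real" where
  "T a b1 b2 x y1 y2 = pz a x * pz b1 y1 * pz b2 y2"

definition g :: "real \<Rightarrow> real \<Rightarrow> real \<Rightarrow> int \<Rightarrow> int \<Rightarrow> real" where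
  "g a b1 b2 i j = (\<Sum>x\<in>{0..min i j}. T a b1 b2 x (i - x) (j - x))"

lemma int_img: "int ` {0..n} = {0..int n}"
  by (auto simp: image_iff) (metis atLeastAtMost_iff nat_int nat_mono nat_eq_iff2 le0 zero_le_imp_eq_int)

lemma pmf_main:
  assumes "a > 0" "b1 > 0" "b2 > 0" "c > 0"
  shows "pmf (map_pmf (\<lambda>(x, y1, y2, z). (x + y1, z, x + y2))
        (pair_pmf (poisson_pmf a) (pair_pmf (poisson_pmf b1) (pair_pmf (poisson_pmf b2) (poisson_pmf c))))) (r, l, u)
     = pz c (int l) * g a b1 b2 (int r) (int u)"
proof -
  let ?F = "(\<lambda>(x::nat, y1::nat, y2::nat, z::nat). (x + y1, z, x + y2))"
  have fib: "?F -` {(r, l, u)} = (\<lambda>x. (x, r - x, u - x, l)) ` {0..min r u}"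
    by (auto simp: image_iff)
  have inj: "inj_on (\<lambda>x. (x, r - x, u - x, l)) {0..min r u}" by (auto simp: inj_on_def)
  have "pmf (map_pmf ?F (pair_pmf (poisson_pmf a) (pair_pmf (poisson_pmf b1) (pair_pmf (poisson_pmf b2) (poisson_pmf c))))) (r, l, u)
     = (\<Sum>x\<in>{0..min r u}. pmf (poisson_pmf a) x * (pmf (poisson_pmf b1) (r - x) * (pmf (poisson_pmf b2) (u - x) * pmf (poisson_pmf c) l)))"
    unfolding pmf_map fib by (simp add: measure_measure_pmf_finite sum.reindex[OF inj] pmf_pair)
  also have "\<dots> = (\<Sum>x\<in>{0..min r u}. pz c (int l) * T a b1 b2 (int x) (int r - int x) (int u - int x))"
  proof (rule sum.cong)
    fix x assume "x \<in> {0..min r u}"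
    then have eq: "int r - int x = int (r - x)" "int u - int x = int (u - x)" by auto
    show "pmf (poisson_pmf a) x * (pmf (poisson_pmf b1) (r - x) * (pmf (poisson_pmf b2) (u - x) * pmf (poisson_pmf c) l))
       = pz c (int l) * T a b1 b2 (int x) (int r - int x) (int u - int x)"
      unfolding T_def eq pz_poisson[OF assms(1)] pz_poisson[OF assms(2)] pz_poisson[OF assms(3)] pz_poisson[OF assms(4)]
      by (simp only: mult_ac)
  qed simp
  also have "\<dots> = pz c (int l) * (\<Sum>x\<in>int ` {0..min r u}. T a b1 b2 x (int r - x) (int u - x))"
    by (simp add: sum_distrib_left sum.reindex)
  also have "\<dots> = pz c (int l) * g a b1 b2 (int r) (int u)"
    unfolding g_def int_img by (simp add: min_def)
  finally show ?thesis .
qed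



lemma sum_supp:
  assumes "finite A" "finite B" "\<And>x. f x \<noteq> 0 \<Longrightarrow> x \<in> A \<and> x \<in> B"
  shows "sum f A = sum f B"
proof -
  have "sum f A = sum f (A \<inter> B)" by (rule sum.mono_neutral_right) (use assms in auto)
  also have "\<dots> = sum f B" by (rule sum.mono_neutral_left) (use assms in auto)
  finally show ?thesis .
qed

lemma shift_int:
  fixes f :: "int \<Rightarrow> real"
  assumes "\<And>x. f x \<noteq> 0 \<Longrightarrow> lo < x \<and> x \<le> hi"
  shows "(\<Sum>x\<in>{lo..hi}. f (x + 1)) = (\<Sum>x\<in>{lo..hi}. f x)"
proof -
  have "(\<Sum>x\<in>{lo..hi}. f (x + 1)) = sum f ((\<lambda>x. x + 1) ` {lo..hi})"
    by (subst sum.reindex) (auto simp: inj_on_def)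
  also have "(\<lambda>x. x + 1) ` {lo..hi} = {lo+1..hi+1}"
    by (auto simp: image_iff)
  also have "sum f {lo+1..hi+1} = sum f {lo..hi}"
    by (rule sum_supp) (use assms in force)+
  finally show ?thesis .
qed

lemma T_nz: "T a b1 b2 x y1 y2 \<noteq> 0 \<Longrightarrow> x \<ge> 0 \<and> y1 \<ge> 0 \<and> y2 \<ge> 0"
  by (auto simp: T_def pz_def split: if_splits)

lemma g_W:
  assumes "finite W" "{0..min i j} \<subseteq> W"
  shows "g a b1 b2 i j = (\<Sum>x\<in>W. T a b1 b2 x (i - x) (j - x))"
  unfolding g_def by (rule sum_supp) (use assms T_nz in force)+

lemma core:
  fixes lam muR muU :: real and r u :: int
  assumes pos: "lam > 0" "muR > 0" "muU > 0" and ru: "r \<ge> 0" "u \<ge> 0"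
    and a: "a = lam / (muR + muU)" and b1: "b1 = lam * muU / (muR * (muR + muU))"
    and b2: "b2 = lam * muR / (muU * (muR + muU))"
  shows "lam * g a b1 b2 (r - 1) (u - 1) + muR * (of_int r + 1) * g a b1 b2 (r + 1) u
       + muU * (of_int u + 1) * g a b1 b2 r (u + 1)
       = (muR * of_int r + muU * of_int u + lam) * g a b1 b2 r u"
proof -
  define W where "W = {-1..r+u+2}"
  define S where "S x = T a b1 b2 x (r - x) (u - x)" for x
  define X where "X = (\<Sum>x\<in>W. of_int x * S x)"
  define G where "G = (\<Sum>x\<in>W. S x)"
  have fW: "finite W" by (simp add: W_def)
  have G: "g a b1 b2 r u = G" unfolding G_def S_def by (rule g_W) (auto simp: W_def)
  have g1: "a * g a b1 b2 (r - 1) (u - 1) = X"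
  proof -
    have "g a b1 b2 (r - 1) (u - 1) = (\<Sum>x\<in>W. T a b1 b2 x (r - 1 - x) (u - 1 - x))"
      by (rule g_W) (auto simp: W_def)
    also have "\<dots> = (\<Sum>x\<in>W. (\<lambda>x. T a b1 b2 (x - 1) (r - x) (u - x)) (x + 1))"
      by (simp add: algebra_simps)
    also have "\<dots> = (\<Sum>x\<in>W. T a b1 b2 (x - 1) (r - x) (u - x))"
      unfolding W_def by (rule shift_int) (use T_nz in force)
    finally have e: "g a b1 b2 (r - 1) (u - 1) = (\<Sum>x\<in>W. T a b1 b2 (x - 1) (r - x) (u - x))" .
    show ?thesis unfolding e X_def S_def sum_distrib_left
      by (intro sum.cong refl) (simp add: T_def mult.assoc[symmetric] pz_shift)
  qed
  define U' where "U' = (\<Sum>x\<in>W. of_int (u - x) * S x)"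
  define R' where "R' = (\<Sum>x\<in>W. of_int (r - x) * S x)"
  have g2: "b2 * ((of_int r + 1) * g a b1 b2 (r + 1) u) = a * U' + b1 * b2 * G"
  proof -
    have e: "g a b1 b2 (r + 1) u = (\<Sum>x\<in>W. T a b1 b2 x (r + 1 - x) (u - x))"
      by (rule g_W) (auto simp: W_def)
    have sp: "(of_int r + 1) * (\<Sum>x\<in>W. T a b1 b2 x (r + 1 - x) (u - x))
       = (\<Sum>x\<in>W. of_int x * T a b1 b2 x (r + 1 - x) (u - x))
       + (\<Sum>x\<in>W. of_int (r + 1 - x) * T a b1 b2 x (r + 1 - x) (u - x))"
      unfolding sum_distrib_left sum.distrib[symmetric]
      by (intro sum.cong refl) (simp add: algebra_simps)
    have p2: "(\<Sum>x\<in>W. of_int (r + 1 - x) * T a b1 b2 x (r + 1 - x) (u - x)) = b1 * G"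
      unfolding G_def S_def sum_distrib_left
    proof (intro sum.cong refl)
      fix x
      have "of_int (r + 1 - x) * pz b1 (r + 1 - x) = b1 * pz b1 (r - x)"
        using pz_shift[of "r + 1 - x" b1] by simp
      then show "of_int (r + 1 - x) * T a b1 b2 x (r + 1 - x) (u - x) = b1 * T a b1 b2 x (r - x) (u - x)"
        unfolding T_def by (metis mult.assoc mult.commute mult.left_commute)
    qed
    have "(\<Sum>x\<in>W. of_int x * T a b1 b2 x (r + 1 - x) (u - x))
        = (\<Sum>x\<in>W. a * T a b1 b2 (x - 1) (r + 1 - x) (u - x))"
      by (intro sum.cong refl) (simp add: T_def mult.assoc[symmetric] pz_shift)
    also have "\<dots> = (\<Sum>x\<in>W. (\<lambda>x. a * T a b1 b2 (x - 1) (r + 1 - x) (u - x)) (x + 1))"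
      unfolding W_def by (rule shift_int[symmetric]) (use T_nz in force)
    also have "\<dots> = (\<Sum>x\<in>W. a * T a b1 b2 x (r - x) (u - x - 1))"
      by (simp add: algebra_simps)
    finally have p1: "(\<Sum>x\<in>W. of_int x * T a b1 b2 x (r + 1 - x) (u - x))
        = (\<Sum>x\<in>W. a * T a b1 b2 x (r - x) (u - x - 1))" .
    have p3: "b2 * (\<Sum>x\<in>W. a * T a b1 b2 x (r - x) (u - x - 1)) = a * U'"
      unfolding U'_def S_def sum_distrib_left
    proof (intro sum.cong refl)
      fix x
      have "of_int (u - x) * pz b2 (u - x) = b2 * pz b2 (u - x - 1)"
        using pz_shift[of "u - x" b2] by simp
      note fct = this
      have "a * (of_int (u - x) * T a b1 b2 x (r - x) (u - x)) = a * (pz a x * pz b1 (r - x) * (of_int (u - x) * pz b2 (u - x)))"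
        unfolding T_def by (simp only: mult_ac)
      also have "\<dots> = a * (pz a x * pz b1 (r - x) * (b2 * pz b2 (u - x - 1)))" unfolding fct ..
      also have "\<dots> = b2 * (a * T a b1 b2 x (r - x) (u - x - 1))" unfolding T_def by (simp only: mult_ac)
      finally show "b2 * (a * T a b1 b2 x (r - x) (u - x - 1)) = a * (of_int (u - x) * T a b1 b2 x (r - x) (u - x))" by (rule sym)
    qed
    have "b2 * ((of_int r + 1) * g a b1 b2 (r + 1) u) = b2 * (\<Sum>x\<in>W. a * T a b1 b2 x (r - x) (u - x - 1)) + b2 * (b1 * G)"
      unfolding e sp p1 p2 by (rule distrib_left)
    then show ?thesis unfolding p3 by (simp add: mult_ac)
  qed
  have g3: "b1 * ((of_int u + 1) * g a b1 b2 r (u + 1)) = a * R' + b1 * b2 * G"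
  proof -
    have e: "g a b1 b2 r (u + 1) = (\<Sum>x\<in>W. T a b1 b2 x (r - x) (u + 1 - x))"
      by (rule g_W) (auto simp: W_def)
    have sp: "(of_int u + 1) * (\<Sum>x\<in>W. T a b1 b2 x (r - x) (u + 1 - x))
       = (\<Sum>x\<in>W. of_int x * T a b1 b2 x (r - x) (u + 1 - x))
       + (\<Sum>x\<in>W. of_int (u + 1 - x) * T a b1 b2 x (r - x) (u + 1 - x))"
      unfolding sum_distrib_left sum.distrib[symmetric]
      by (intro sum.cong refl) (simp add: algebra_simps)
    have p2: "(\<Sum>x\<in>W. of_int (u + 1 - x) * T a b1 b2 x (r - x) (u + 1 - x)) = b2 * G"
      unfolding G_def S_def sum_distrib_left
    proof (intro sum.cong refl)
      fix x
      have "of_int (u + 1 - x) * pz b2 (u + 1 - x) = b2 * pz b2 (u - x)"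
        using pz_shift[of "u + 1 - x" b2] by simp
      then show "of_int (u + 1 - x) * T a b1 b2 x (r - x) (u + 1 - x) = b2 * T a b1 b2 x (r - x) (u - x)"
        unfolding T_def by (metis mult.assoc mult.commute mult.left_commute)
    qed
    have "(\<Sum>x\<in>W. of_int x * T a b1 b2 x (r - x) (u + 1 - x))
        = (\<Sum>x\<in>W. a * T a b1 b2 (x - 1) (r - x) (u + 1 - x))"
      by (intro sum.cong refl) (simp add: T_def mult.assoc[symmetric] pz_shift)
    also have "\<dots> = (\<Sum>x\<in>W. (\<lambda>x. a * T a b1 b2 (x - 1) (r - x) (u + 1 - x)) (x + 1))"
      unfolding W_def by (rule shift_int[symmetric]) (use T_nz in force)
    also have "\<dots> = (\<Sum>x\<in>W. a * T a b1 b2 x (r - x - 1) (u - x))"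
      by (simp add: algebra_simps)
    finally have p1: "(\<Sum>x\<in>W. of_int x * T a b1 b2 x (r - x) (u + 1 - x))
        = (\<Sum>x\<in>W. a * T a b1 b2 x (r - x - 1) (u - x))" .
    have p3: "b1 * (\<Sum>x\<in>W. a * T a b1 b2 x (r - x - 1) (u - x)) = a * R'"
      unfolding R'_def S_def sum_distrib_left
    proof (intro sum.cong refl)
      fix x
      have "of_int (r - x) * pz b1 (r - x) = b1 * pz b1 (r - x - 1)"
        using pz_shift[of "r - x" b1] by simp
      note fct = this
      have "a * (of_int (r - x) * T a b1 b2 x (r - x) (u - x)) = a * (pz a x * (of_int (r - x) * pz b1 (r - x)) * pz b2 (u - x))"
        unfolding T_def by (simp only: mult_ac)
      also have "\<dots> = a * (pz a x * (b1 * pz b1 (r - x - 1)) * pz b2 (u - x))" unfolding fct ..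
      also have "\<dots> = b1 * (a * T a b1 b2 x (r - x - 1) (u - x))" unfolding T_def by (simp only: mult_ac)
      finally show "b1 * (a * T a b1 b2 x (r - x - 1) (u - x)) = a * (of_int (r - x) * T a b1 b2 x (r - x) (u - x))" by (rule sym)
    qed
    have "b1 * ((of_int u + 1) * g a b1 b2 r (u + 1)) = b1 * (\<Sum>x\<in>W. a * T a b1 b2 x (r - x - 1) (u - x)) + b1 * (b2 * G)"
      unfolding e sp p1 p2 by (rule distrib_left)
    then show ?thesis unfolding p3 by (simp add: mult_ac)
  qed
  have U': "U' = of_int u * G - X" unfolding U'_def G_def X_def
    by (simp add: sum_distrib_left sum_subtractf[symmetric] algebra_simps)
  have R': "R' = of_int r * G - X" unfolding R'_def G_def X_def
    by (simp add: sum_distrib_left sum_subtractf[symmetric] algebra_simps)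
  have sn: "muR + muU \<noteq> 0" "muR \<noteq> 0" "muU \<noteq> 0" using pos by auto
  have i1: "lam = (muR + muU) * a" unfolding a using sn by (simp add: field_simps)
  have i2: "muR * a = muU * b2" unfolding a b2 using sn by (simp add: divide_simps)
  have i3: "muU * a = muR * b1" unfolding a b1 using sn by (simp add: divide_simps)
  have i4: "muR * b1 + muU * b2 = lam" unfolding b1 b2 using sn by (simp add: divide_simps) (simp add: algebra_simps)
  have b1p: "b1 > 0" and b2p: "b2 > 0" using pos unfolding b1 b2 by auto
  have h1: "lam * g a b1 b2 (r - 1) (u - 1) = (muR + muU) * X"
    using g1 i1 by (simp add: mult.assoc)
  have "b2 * (muR * ((of_int r + 1) * g a b1 b2 (r + 1) u)) = muR * (b2 * ((of_int r + 1) * g a b1 b2 (r + 1) u))"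
    by (simp only: mult_ac)
  also have "\<dots> = muR * (a * U' + b1 * b2 * G)" unfolding g2 ..
  also have "\<dots> = (muR * a) * U' + b2 * (muR * b1 * G)" by (simp add: algebra_simps)
  also have "\<dots> = b2 * (muU * U' + muR * b1 * G)" unfolding i2 by (simp add: algebra_simps)
  finally have "b2 * (muR * ((of_int r + 1) * g a b1 b2 (r + 1) u)) = b2 * (muU * U' + muR * b1 * G)" .
  then have h2: "muR * ((of_int r + 1) * g a b1 b2 (r + 1) u) = muU * U' + muR * b1 * G"
    using b2p by simp
  have "b1 * (muU * ((of_int u + 1) * g a b1 b2 r (u + 1))) = muU * (b1 * ((of_int u + 1) * g a b1 b2 r (u + 1)))"
    by (simp only: mult_ac)
  also have "\<dots> = muU * (a * R' + b1 * b2 * G)" unfolding g3 ..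
  also have "\<dots> = (muU * a) * R' + b1 * (muU * b2 * G)" by (simp add: algebra_simps)
  also have "\<dots> = b1 * (muR * R' + muU * b2 * G)" unfolding i3 by (simp add: algebra_simps)
  finally have "b1 * (muU * ((of_int u + 1) * g a b1 b2 r (u + 1))) = b1 * (muR * R' + muU * b2 * G)" .
  then have h3: "muU * ((of_int u + 1) * g a b1 b2 r (u + 1)) = muR * R' + muU * b2 * G"
    using b1p by simp
  have "lam * g a b1 b2 (r - 1) (u - 1) + muR * (of_int r + 1) * g a b1 b2 (r + 1) u
       + muU * (of_int u + 1) * g a b1 b2 r (u + 1)
       = lam * g a b1 b2 (r - 1) (u - 1) + muR * ((of_int r + 1) * g a b1 b2 (r + 1) u)
       + muU * ((of_int u + 1) * g a b1 b2 r (u + 1))" by (simp only: mult.assoc)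
  also have "\<dots> = (muR + muU) * X + (muU * U' + muR * b1 * G) + (muR * R' + muU * b2 * G)"
    unfolding h1 h2 h3 ..
  also have "\<dots> = (muR * of_int r + muU * of_int u + (muR * b1 + muU * b2)) * G"
    unfolding U' R' by (simp add: algebra_simps)
  finally show ?thesis unfolding G i4 .
qed



lemma hs1:
  assumes "Q \<Longrightarrow> c \<in> A"
  shows "((\<lambda>x. if x = c \<and> Q then v else 0) has_sum (if Q then v else (0::real))) A"
  by (rule has_sum_finite_neutralI[of "if Q then {c} else {}"]) (use assms in auto)

lemma rate_in:
  "rate3 lam muR muL muU x (r, l, u) =
     (if x = (r - 1, l + 1, u - 1) \<and> (r \<ge> 1 \<and> u \<ge> 1) then muL * (real l + 1) else 0)
   + (if x = (r + 1, l, u) \<and> True then muR * (real r + 1) else 0)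
   + (if x = (r, l, u + 1) \<and> True then muU * (real u + 1) else 0)
   + (if x = (r, l - 1, u) \<and> l \<ge> 1 then lam else 0)"
proof -
  obtain xR xL xU where x: "x = (xR, xL, xU)" by (cases x) auto
  show ?thesis unfolding x rate3_def by auto
qed

lemma rate_out:
  "rate3 lam muR muL muU (r, l, u) z =
     (if z = (r + 1, l - 1, u + 1) \<and> l \<ge> 1 then muL * real l else 0)
   + (if z = (r - 1, l, u) \<and> r \<ge> 1 then muR * real r else 0)
   + (if z = (r, l, u - 1) \<and> u \<ge> 1 then muU * real u else 0)
   + (if z = (r, l + 1, u) \<and> True then lam else 0)"
  unfolding rate3_def by auto

lemma g_neg: "min i j < 0 \<Longrightarrow> g a b1 b2 i j = 0"
  by (simp add: g_def)



lemma mult_if_single: "f x * (if x = c \<and> Q then v else (0::real)) = (if x = c \<and> Q then f c * v else 0)"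
  by auto

theorem mainTheorem4:
  fixes lam muR muL muU :: real
  assumes "lam > 0" "muR > 0" "muL > 0" "muU > 0"
  shows "invariant_pmf (rate3 lam muR muL muU)
     (map_pmf (\<lambda>(x, y1, y2, z). (x + y1, z, x + y2))
        (pair_pmf (poisson_pmf (lam / (muR + muU)))
          (pair_pmf (poisson_pmf (lam * muU / (muR * (muR + muU))))
            (pair_pmf (poisson_pmf (lam * muR / (muU * (muR + muU))))
              (poisson_pmf (lam / muL))))))"
proof -
  define a where "a = lam / (muR + muU)"
  define b1 where "b1 = lam * muU / (muR * (muR + muU))"
  define b2 where "b2 = lam * muR / (muU * (muR + muU))"
  define c where "c = lam / muL"
  have pos: "a > 0" "b1 > 0" "b2 > 0" "c > 0"
    using assms unfolding a_def b1_def b2_def c_def by auto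
  define p where "p = map_pmf (\<lambda>(x, y1, y2, z). (x + y1, z, x + y2))
        (pair_pmf (poisson_pmf a) (pair_pmf (poisson_pmf b1) (pair_pmf (poisson_pmf b2) (poisson_pmf c))))"
  define q where "q = rate3 lam muR muL muU"
  have P: "pmf p (r, l, u) = pz c (int l) * g a b1 b2 (int r) (int u)" for r l u
    unfolding p_def by (rule pmf_main[OF pos])
  have "(\<Sum>\<^sub>\<infinity>x\<in>-{y}. pmf p x * q x y) = pmf p y * (\<Sum>\<^sub>\<infinity>z\<in>-{y}. q y z)" for y
  proof -
    obtain r l u where y: "y = (r, l, u)" by (cases y) auto
    define V1 where "V1 = pmf p (r - 1, l + 1, u - 1) * (muL * (real l + 1))"
    define V2 where "V2 = pmf p (r + 1, l, u) * (muR * (real r + 1))"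
    define V3 where "V3 = pmf p (r, l, u + 1) * (muU * (real u + 1))"
    define V4 where "V4 = pmf p (r, l - 1, u) * lam"
    have fe: "(\<lambda>x. pmf p x * q x y) = (\<lambda>x.
        (if x = (r - 1, l + 1, u - 1) \<and> (r \<ge> 1 \<and> u \<ge> 1) then V1 else 0)
      + (if x = (r + 1, l, u) \<and> True then V2 else 0)
      + (if x = (r, l, u + 1) \<and> True then V3 else 0)
      + (if x = (r, l - 1, u) \<and> l \<ge> 1 then V4 else 0))"
      unfolding q_def y rate_in V1_def V2_def V3_def V4_def distrib_left mult_if_single ..
    have "((\<lambda>x. pmf p x * q x y) has_sum
        ((if r \<ge> 1 \<and> u \<ge> 1 then V1 else 0) + (if True then V2 else 0) + (if True then V3 else 0)
         + (if l \<ge> 1 then V4 else 0))) (-{y})"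
      unfolding fe
      by (intro has_sum_add hs1) (auto simp: y)
    then have inflow: "(\<Sum>\<^sub>\<infinity>x\<in>-{y}. pmf p x * q x y) =
        (if r \<ge> 1 \<and> u \<ge> 1 then V1 else 0) + V2 + V3 + (if l \<ge> 1 then V4 else 0)"
      by (simp add: infsumI)
    have fo: "(\<lambda>z. q y z) = (\<lambda>z.
       (if z = (r + 1, l - 1, u + 1) \<and> l \<ge> 1 then muL * real l else 0)
     + (if z = (r - 1, l, u) \<and> r \<ge> 1 then muR * real r else 0)
     + (if z = (r, l, u - 1) \<and> u \<ge> 1 then muU * real u else 0)
     + (if z = (r, l + 1, u) \<and> True then lam else 0))"
      unfolding q_def y rate_out ..
    have "((\<lambda>z. q y z) has_sum
        ((if l \<ge> 1 then muL * real l else 0) + (if r \<ge> 1 then muR * real r else 0)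
        + (if u \<ge> 1 then muU * real u else 0) + (if True then lam else 0))) (-{y})"
      unfolding fo
      by (intro has_sum_add hs1) (auto simp: y)
    note that = this
    have outflow: "(\<Sum>\<^sub>\<infinity>z\<in>-{y}. q y z) = muL * real l + muR * real r + muU * real u + lam"
    proof -
      have "(if l \<ge> 1 then muL * real l else 0) = muL * real l"
        "(if r \<ge> 1 then muR * real r else 0) = muR * real r"
        "(if u \<ge> 1 then muU * real u else 0) = muU * real u" by auto
      with infsumI[OF that] show ?thesis by simp
    qed
    define G1 where "G1 = g a b1 b2 (int r - 1) (int u - 1)"
    define G2 where "G2 = g a b1 b2 (int r + 1) (int u)"
    define G3 where "G3 = g a b1 b2 (int r) (int u + 1)"
    define G where "G = g a b1 b2 (int r) (int u)"
    have e1: "(if r \<ge> 1 \<and> u \<ge> 1 then V1 else 0) = muL * (real l + 1) * pz c (int l + 1) * G1"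
    proof (cases "r \<ge> 1 \<and> u \<ge> 1")
      case True
      then have "int (r - 1) = int r - 1" "int (u - 1) = int u - 1" "int (l + 1) = int l + 1" by auto
      then show ?thesis using True unfolding V1_def P G1_def by (simp add: add.commute)
    next
      case False
      then have "min (int r - 1) (int u - 1) < 0" by auto
      then have "G1 = 0" unfolding G1_def by (rule g_neg)
      moreover have "(if r \<ge> 1 \<and> u \<ge> 1 then V1 else 0) = 0" using False by (rule if_not_P)
      ultimately show ?thesis by simp
    qed
    have e2: "V2 = muR * (real r + 1) * pz c (int l) * G2"
      unfolding V2_def P G2_def by (simp add: add.commute)
    have e3: "V3 = muU * (real u + 1) * pz c (int l) * G3"
      unfolding V3_def P G3_def by (simp add: add.commute)
    have e4: "(if l \<ge> 1 then V4 else 0) = lam * pz c (int l - 1) * G"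
    proof (cases "l \<ge> 1")
      case True
      then have "int (l - 1) = int l - 1" by auto
      then show ?thesis using True unfolding V4_def P G_def by simp
    next
      case False
      then show ?thesis by (simp add: pz_def)
    qed
    have c1: "muL * (real l + 1) * pz c (int l + 1) = lam * pz c (int l)"
    proof -
      have "of_int (int l + 1) * pz c (int l + 1) = c * pz c (int l)"
        using pz_shift[of "int l + 1" c] by simp
      then show ?thesis unfolding c_def using assms by (simp add: field_simps)
    qed
    have c4: "lam * pz c (int l - 1) = muL * real l * pz c (int l)"
    proof -
      have "of_int (int l) * pz c (int l) = c * pz c (int l - 1)"
        using pz_shift[of "int l" c] by simp
      then show ?thesis unfolding c_def using assms by (simp add: field_simps)
    qed
    have core': "lam * G1 + muR * (of_int (int r) + 1) * G2 + muU * (of_int (int u) + 1) * G3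
       = (muR * of_int (int r) + muU * of_int (int u) + lam) * G"
      unfolding G1_def G2_def G3_def G_def
      by (rule core[OF assms(1,2,4)]) (auto simp: a_def b1_def b2_def)
    have "(\<Sum>\<^sub>\<infinity>x\<in>-{y}. pmf p x * q x y)
        = pz c (int l) * (lam * G1 + muR * (of_int (int r) + 1) * G2 + muU * (of_int (int u) + 1) * G3)
          + muL * real l * pz c (int l) * G"
      unfolding inflow e1 e2 e3 e4 c1 c4 by (simp add: algebra_simps)
    also have "\<dots> = pmf p y * (\<Sum>\<^sub>\<infinity>z\<in>-{y}. q y z)"
      unfolding core' outflow unfolding y P G_def by (simp add: algebra_simps)
    finally show ?thesis .
  qed
  then show ?thesis unfolding invariant_pmf_def p_def q_def a_def b1_def b2_def c_def by blast
qed


end
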